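(* Let $q$ be a query and run the Neighboring Graph Defects Fixing procedure (described in the context) for $q$ on a graph index $G=(V,E,E_{EX})$ with parameters $N_q$, $K_h\ge N_q$ and $M_{EX}$. Then the procedure inserts at most $2(N_q-1)$ extra directed edges into $E_{EX}$.
   Context: Setting: $X\subseteq\mathbb{R}^d$ finite base set, $\delta$ a symmetric distance, $N_{i,q}$ the $i$-th nearest neighbour of $q$ in $X$, $F_{x,q}$ the rank of $x\in X$ as a neighbour of $q$. A graph index is $G=(V,E,E_{EX})$ with vertex set $X$, base directed edges $E$ and extra directed edges $E_{EX}$, each extra edge stored as a triple $(u,v,h)$ with a weight $h$; paths use edges of $E\cup E_{EX}$. Escape Hardness: $EH(u,v,q,G)=\min_{p}\max_{x\in p}F_{x,q}$ over directed paths $p$ from $u$ to $v$ ($+\infty$ if none); $\mathbb{H}_{i,j}=EH(N_{i,q},N_{j,q},q,G)$ for $1\le i,j\le N_q$. The $K_h$-reachable matrix $\mathbb{T}\in\{0,1\}^{N_q\times N_q}$ has $\mathbb{T}_{i,j}=1$ iff $\mathbb{H}_{i,j}\le K_h$. For a vertex $u$, $ExtraNeighbors(u)$ is the set of $v$ with $(u,v,h)\in E_{EX}$ for some $h$. Procedure (with $\mathbb{H},\mathbb{T}$ computed on the input graph): let $EC$ be the set of pairs $(i,j)$, $1\le i,j\le N_q$, with $\mathbb{T}_{i,j}=0$, sorted in ascending order of $\delta(N_{i,q},N_{j,q})$. While $EC\ne\emptyset$: pop the first pair $(s,t)$; if $\mathbb{T}_{s,t}\ne0$, continue to the next pair; otherwise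 set $\mathbb{T}_{s,t}\leftarrow1$; if $|ExtraNeighbors(N_{s,q})|<M_{EX}$, insert $(N_{s,q},N_{t,q},\mathbb{H}_{s,t})$ into $E_{EX}$; else choose $(N_{s,q},v,h)\in E_{EX}$ with minimum $h$ and, if $h<\mathbb{H}_{s,t}$, remove it from $E_{EX}$ and insert $(N_{s,q},N_{t,q},\mathbb{H}_{s,t})$; then for all $1\le i,j\le N_q$ set $\mathbb{T}_{i,j}\leftarrow\mathbb{T}_{i,j}\lor(\mathbb{T}_{i,s}\land\mathbb{T}_{t,j})$. Return the resulting graph. *)

theory Defs
  imports "HOL-Analysis.Analysis" "HOL-Library.Extended_Nat"
begin

type_synonym 'd point = "real ^ 'd"

definition rank :: "(nat \<Rightarrow> 'p) \<Rightarrow> 'p set \<Rightarrow> 'p \<Rightarrow> nat" where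
  "rank N X x = the_inv_into {1..card X} N x"

definition nn_enum :: "('p \<Rightarrow> 'p \<Rightarrow> real) \<Rightarrow> 'p set \<Rightarrow> 'p \<Rightarrow> (nat \<Rightarrow> 'p) \<Rightarrow> bool" where
  "nn_enum \<delta> X q N \<longleftrightarrow> bij_betw N {1..card X} X \<and>
     (\<forall>i j. 1 \<le> i \<longrightarrow> i \<le> j \<longrightarrow> j \<le> card X \<longrightarrow> \<delta> q (N i) \<le> \<delta> q (N j))"

definition all_edges :: "('p \<times> 'p) set \<Rightarrow> ('p \<times> 'p \<times> enat) set \<Rightarrow> ('p \<times> 'p) set" where
  "all_edges E EEX = E \<union> {(u, v). \<exists>h. (u, v, h) \<in> EEX}"

definition gpath :: "('p \<times> 'p) set \<Rightarrow> 'p list \<Rightarrow> bool" where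
  "gpath A p \<longleftrightarrow> p \<noteq> [] \<and> (\<forall>k. Suc k < length p \<longrightarrow> (p ! k, p ! Suc k) \<in> A)"

text \<open>Escape hardness EH(u,v,q,G); the infimum of the empty set in enat is \<infinity>.\<close>
definition EH :: "('p \<Rightarrow> nat) \<Rightarrow> ('p \<times> 'p) set \<Rightarrow> ('p \<times> 'p \<times> enat) set \<Rightarrow> 'p \<Rightarrow> 'p \<Rightarrow> enat" where
  "EH F E EEX u v =
     (INF p \<in> {p. gpath (all_edges E EEX) p \<and> hd p = u \<and> last p = v}. enat (Max (F ` set p)))"

definition ExtraNeighbors :: "('p \<times> 'p \<times> enat) set \<Rightarrow> 'p \<Rightarrow> 'p set" where
  "ExtraNeighbors EEX u = {v. \<exists>h. (u, v, h) \<in> EEX}"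

definition T_update :: "(nat \<Rightarrow> nat \<Rightarrow> bool) \<Rightarrow> nat \<Rightarrow> nat \<Rightarrow> (nat \<Rightarrow> nat \<Rightarrow> bool)" where
  "T_update T s t = (let T' = T(s := (T s)(t := True)) in (\<lambda>i j. T' i j \<or> (T' i s \<and> T' t j)))"

text \<open>State: (reachable matrix, extra edge set, number of insertions performed).
  Parameters: neighbour enumeration N, the fixed matrix H (computed on the input graph), M_EX.
  The choice of a minimum-weight extra edge is nondeterministic.\<close>
inductive ngdf_run ::
  "(nat \<Rightarrow> 'p) \<Rightarrow> (nat \<Rightarrow> nat \<Rightarrow> enat) \<Rightarrow> nat \<Rightarrow> (nat \<times> nat) list \<Rightarrow>
   (nat \<Rightarrow> nat \<Rightarrow> bool) \<times> ('p \<times> 'p \<times> enat) set \<times> nat \<Rightarrow>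
   (nat \<Rightarrow> nat \<Rightarrow> bool) \<times> ('p \<times> 'p \<times> enat) set \<times> nat \<Rightarrow> bool"
  for N H M where
  run_nil: "ngdf_run N H M [] st st"
| run_skip: "T s t \<Longrightarrow> ngdf_run N H M ps (T, EEX, c) st' \<Longrightarrow> ngdf_run N H M ((s, t) # ps) (T, EEX, c) st'"
| run_ins: "\<not> T s t \<Longrightarrow> card (ExtraNeighbors EEX (N s)) < M \<Longrightarrow>
        ngdf_run N H M ps (T_update T s t, insert (N s, N t, H s t) EEX, Suc c) st' \<Longrightarrow>
        ngdf_run N H M ((s, t) # ps) (T, EEX, c) st'"
| run_repl: "\<not> T s t \<Longrightarrow> \<not> card (ExtraNeighbors EEX (N s)) < M \<Longrightarrow>
        (N s, v, h) \<in> EEX \<Longrightarrow> (\<forall>v' h'. (N s, v', h') \<in> EEX \<longrightarrow> h \<le> h') \<Longrightarrow> h < H s t \<Longrightarrow>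
        ngdf_run N H M ps (T_update T s t, insert (N s, N t, H s t) (EEX - {(N s, v, h)}), Suc c) st' \<Longrightarrow>
        ngdf_run N H M ((s, t) # ps) (T, EEX, c) st'"
| run_keep: "\<not> T s t \<Longrightarrow> \<not> card (ExtraNeighbors EEX (N s)) < M \<Longrightarrow>
        (\<forall>v h. (N s, v, h) \<in> EEX \<longrightarrow> \<not> h < H s t) \<Longrightarrow>
        ngdf_run N H M ps (T_update T s t, EEX, c) st' \<Longrightarrow>
        ngdf_run N H M ((s, t) # ps) (T, EEX, c) st'"

text \<open>Order on candidate pairs: ascending in \<delta>(N_i,N_j); ties broken by the unordered pair
  (min, max) lexicographically, so a pair and its reverse are adjacent.\<close>
definition ec_le :: "('p \<Rightarrow> 'p \<Rightarrow> real) \<Rightarrow> (nat \<Rightarrow> 'p) \<Rightarrow> nat \<times> nat \<Rightarrow> nat \<times> nat \<Rightarrow> bool" where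
  "ec_le \<delta> N a b = (case a of (i, j) \<Rightarrow> case b of (k, l) \<Rightarrow>
     \<delta> (N i) (N j) < \<delta> (N k) (N l) \<or>
     (\<delta> (N i) (N j) = \<delta> (N k) (N l) \<and>
       (min i j < min k l \<or> (min i j = min k l \<and> max i j \<le> max k l))))"

end

theory Submission
  imports Defs
begin

definition Rset :: "nat set \<Rightarrow> (nat \<Rightarrow> nat \<Rightarrow> bool) \<Rightarrow> nat set" where
  "Rset D T = {i\<in>D. \<forall>j\<in>D. j < i \<longrightarrow> \<not> (T i j \<and> T j i)}"

definition rt :: "nat set \<Rightarrow> (nat \<Rightarrow> nat \<Rightarrow> bool) \<Rightarrow> bool" where
  "rt D T \<longleftrightarrow> (\<forall>i\<in>D. T i i) \<and> (\<forall>i\<in>D. \<forall>j\<in>D. \<forall>k\<in>D. T i j \<longrightarrow> T j k \<longrightarrow> T i k)"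

lemma upd_char:
  assumes "rt D T" "s \<in> D" "t \<in> D" "i \<in> D" "j \<in> D"
  shows "T_update T s t i j \<longleftrightarrow> T i j \<or> (T i s \<and> T t j)"
proof -
  have "T s s" "T t t" using assms(1-3) unfolding rt_def by blast+
  then show ?thesis unfolding T_update_def Let_def by auto
qed

lemma upd_ge: "T i j \<Longrightarrow> T_update T s t i j"
  unfolding T_update_def Let_def by auto

lemma upd_st: "T_update T s t s t"
  unfolding T_update_def Let_def by auto

lemma rt_trans: "rt D T \<Longrightarrow> a\<in>D \<Longrightarrow> b\<in>D \<Longrightarrow> c\<in>D \<Longrightarrow> T a b \<Longrightarrow> T b c \<Longrightarrow> T a c"
  unfolding rt_def by blast

lemma upd_rt:
  assumes "rt D T" "s \<in> D" "t \<in> D"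
  shows "rt D (T_update T s t)"
proof -
  have c: "\<And>i j. i \<in> D \<Longrightarrow> j \<in> D \<Longrightarrow> T_update T s t i j \<longleftrightarrow> T i j \<or> (T i s \<and> T t j)"
    using upd_char[OF assms] by blast
  show ?thesis unfolding rt_def
  proof (intro conjI ballI impI)
    fix i assume "i \<in> D" then have "T i i" using assms(1) unfolding rt_def by blast
    then show "T_update T s t i i" by (rule upd_ge)
  next
    fix i j k assume ijk: "i \<in> D" "j \<in> D" "k \<in> D" "T_update T s t i j" "T_update T s t j k"
    have "T i j \<or> (T i s \<and> T t j)" using c[OF ijk(1,2)] ijk(4) by simp
    moreover have "T j k \<or> (T j s \<and> T t k)" using c[OF ijk(2,3)] ijk(5) by simp
    moreover note tr = rt_trans[OF assms(1)]
    ultimately have "T i k \<or> (T i s \<and> T t k)"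
      using tr[of i j k] tr[of i j s] tr[of t j k] ijk(1-3) assms(2,3) by blast
    then show "T_update T s t i k" using c[OF ijk(1,3)] by simp
  qed
qed

lemma merge:
  assumes rT: "rt D T" and rT': "rt D T'" and ge: "\<forall>i\<in>D. \<forall>j\<in>D. T i j \<longrightarrow> T' i j"
    and sD: "s\<in>D" and tD: "t\<in>D" and nst: "\<not>(T s t \<and> T t s)" and st: "T' s t" and ts: "T' t s"
    and fin: "finite D"
  shows "card (Rset D T') < card (Rset D T)"
proof -
  have sub: "Rset D T' \<subseteq> Rset D T" using ge unfolding Rset_def by blast
  define a where "a = (LEAST j. j\<in>D \<and> T s j \<and> T j s)"
  define b where "b = (LEAST j. j\<in>D \<and> T t j \<and> T j t)"
  have ha: "a\<in>D \<and> T s a \<and> T a s" unfolding a_def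
    by (rule LeastI[of _ s]) (use rT sD rt_def in auto)
  have hb: "b\<in>D \<and> T t b \<and> T b t" unfolding b_def
    by (rule LeastI[of _ t]) (use rT tD rt_def in auto)
  have aR: "a \<in> Rset D T"
  proof -
    have "\<forall>j\<in>D. j < a \<longrightarrow> \<not>(T a j \<and> T j a)"
    proof (intro ballI impI notI)
      fix j assume j: "j\<in>D" "j<a" "T a j \<and> T j a"
      then have "T s j \<and> T j s" using ha rT sD unfolding rt_def by blast
      then have "a \<le> j" unfolding a_def using j(1) by (simp add: Least_le)
      with j(2) show False by simp
    qed
    then show ?thesis using ha unfolding Rset_def by blast
  qed
  have bR: "b \<in> Rset D T"
  proof -
    have "\<forall>j\<in>D. j < b \<longrightarrow> \<not>(T b j \<and> T j b)"
    proof (intro ballI impI notI)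
      fix j assume j: "j\<in>D" "j<b" "T b j \<and> T j b"
      then have "T t j \<and> T j t" using hb rT tD unfolding rt_def by blast
      then have "b \<le> j" unfolding b_def using j(1) by (simp add: Least_le)
      with j(2) show False by simp
    qed
    then show ?thesis using hb unfolding Rset_def by blast
  qed
  have ab: "a \<noteq> b"
  proof
    assume "a = b"
    have tr: "\<And>a b c. a\<in>D \<Longrightarrow> b\<in>D \<Longrightarrow> c\<in>D \<Longrightarrow> T a b \<Longrightarrow> T b c \<Longrightarrow> T a c"
      using rT unfolding rt_def by blast
    have "T s t \<and> T t s" using tr[of s a t] tr[of t a s] \<open>a = b\<close> ha hb sD tD by blast
    with nst show False by simp
  qed
  have T'ab: "T' a b \<and> T' b a"
  proof -
    have "T' a s" "T' s a" "T' t b" "T' b t" using ha hb ge sD tD by auto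
    moreover have tr: "\<And>a b c. a\<in>D \<Longrightarrow> b\<in>D \<Longrightarrow> c\<in>D \<Longrightarrow> T' a b \<Longrightarrow> T' b c \<Longrightarrow> T' a c"
      using rT' unfolding rt_def by blast
    ultimately show ?thesis using tr[of a s t] tr[of a t b] tr[of b t s] tr[of b s a] st ts ha hb sD tD by blast
  qed
  have "max a b \<notin> Rset D T'"
  proof (cases "a < b")
    case True
    then show ?thesis using T'ab ha hb unfolding Rset_def by (auto simp: max_def)
  next
    case False
    then have "b < a" using ab by simp
    then show ?thesis using T'ab ha hb unfolding Rset_def by (auto simp: max_def)
  qed
  moreover have "max a b \<in> Rset D T" using aR bR by (simp add: max_def)
  ultimately have "Rset D T' \<subset> Rset D T" using sub by blast
  moreover have "finite (Rset D T)" using fin unfolding Rset_def by simp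
  ultimately show ?thesis by (rule psubset_card_mono[rotated])
qed

lemma step:
  "ngdf_run N H M ((s,t)#ps) (T,E,c0) st' \<Longrightarrow>
   (T s t \<and> ngdf_run N H M ps (T,E,c0) st') \<or>
   (\<not> T s t \<and> (\<exists>E' c1. c1 \<le> Suc c0 \<and> ngdf_run N H M ps (T_update T s t, E', c1) st'))"
  by (erule ngdf_run.cases) fastforce+

lemma adj:
  assumes sym: "\<forall>x y. \<delta> x y = \<delta> y x"
    and so: "sorted_wrt (ec_le \<delta> N) ((s,t)#x#rest)"
    and di: "distinct ((s,t)#x#rest)" and ts: "(t,s) \<in> set (x#rest)"
  shows "x = (t,s)"
proof (rule ccontr)
  assume nx: "x \<noteq> (t,s)"
  then have "(t,s) \<in> set rest" using ts by simp
  then have l1: "ec_le \<delta> N (s,t) x" and l2: "ec_le \<delta> N x (t,s)" using so by auto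
  obtain x1 x2 where x: "x = (x1,x2)" by fastforce
  have d: "\<delta> (N t) (N s) = \<delta> (N s) (N t)" using sym by simp
  have A: "\<delta> (N s) (N t) < \<delta> (N x1) (N x2) \<or> (\<delta> (N s) (N t) = \<delta> (N x1) (N x2) \<and>
       (min s t < min x1 x2 \<or> (min s t = min x1 x2 \<and> max s t \<le> max x1 x2)))"
    using l1 unfolding x ec_le_def by simp
  have B0: "\<delta> (N x1) (N x2) < \<delta> (N t) (N s) \<or> (\<delta> (N x1) (N x2) = \<delta> (N t) (N s) \<and>
       (min x1 x2 < min t s \<or> (min x1 x2 = min t s \<and> max x1 x2 \<le> max t s)))"
    using l2 unfolding x ec_le_def by simp
  have mm: "min t s = min s t" "max t s = max s t" by (rule min.commute, rule max.commute)
  have B: "\<delta> (N x1) (N x2) < \<delta> (N s) (N t) \<or> (\<delta> (N x1) (N x2) = \<delta> (N s) (N t) \<and>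
       (min x1 x2 < min s t \<or> (min x1 x2 = min s t \<and> max x1 x2 \<le> max s t)))"
    using B0 unfolding d mm .
  have "min x1 x2 = min s t \<and> max x1 x2 = max s t"
    using A B by linarith
  then have "x = (s,t) \<or> x = (t,s)" unfolding x by (auto simp: min_def max_def split: if_splits)
  moreover have "x \<noteq> (s,t)" using di by auto
  ultimately show False using nx by simp
qed

lemma run_nil: "ngdf_run N H M [] st st' \<Longrightarrow> st' = st"
  by (erule ngdf_run.cases) auto

lemma main:
  assumes sym: "\<forall>x y. \<delta> x y = \<delta> y x" and fin: "finite D"
  shows "ngdf_run N H M ps (T, E, c0) (Tf, Ef, c) \<Longrightarrow> rt D T \<Longrightarrow> set ps \<subseteq> D \<times> D \<Longrightarrow>
     distinct ps \<Longrightarrow> sorted_wrt (ec_le \<delta> N) ps \<Longrightarrow>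
     (\<forall>u\<in>D. \<forall>v\<in>D. \<not> T u v \<longrightarrow> (u,v) \<in> set ps) \<Longrightarrow>
     c + 2 * card (Rset D Tf) \<le> c0 + 2 * card (Rset D T)"
proof (induction "length ps" arbitrary: ps T E c0 rule: less_induct)
  case less
  show ?case
  proof (cases ps)
    case Nil
    then show ?thesis using less.prems(1) run_nil by fastforce
  next
    case (Cons p rest)
    obtain s t where p: "p = (s,t)" by fastforce
    have sD: "s \<in> D" and tD: "t \<in> D" using less.prems(3) Cons p by auto
    have run: "ngdf_run N H M ((s,t)#rest) (T,E,c0) (Tf,Ef,c)" using less.prems(1) Cons p by simp
    have dr: "distinct rest" and sr: "sorted_wrt (ec_le \<delta> N) rest" and setr: "set rest \<subseteq> D \<times> D"
      using less.prems Cons by auto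
    note st = step[OF run]
    show ?thesis
    proof (cases "T s t")
      case True
      then have r: "ngdf_run N H M rest (T,E,c0) (Tf,Ef,c)" using st by blast
      have pend: "\<forall>u\<in>D. \<forall>v\<in>D. \<not> T u v \<longrightarrow> (u,v) \<in> set rest"
        using less.prems(6) True Cons p by auto
      show ?thesis using less.hyps[of rest T E c0] Cons r less.prems(2) setr dr sr pend by simp
    next
      case False
      then obtain E' c1 where c1: "c1 \<le> Suc c0"
        and r: "ngdf_run N H M rest (T_update T s t, E', c1) (Tf,Ef,c)" using st by blast
      define U where "U = T_update T s t"
      have rU: "rt D U" unfolding U_def using upd_rt less.prems(2) sD tD by blast
      have UT: "\<And>i j. T i j \<Longrightarrow> U i j" unfolding U_def by (rule upd_ge)
      have Ust: "U s t" unfolding U_def by (rule upd_st)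
      show ?thesis
      proof (cases "T t s")
        case True
        have m: "card (Rset D U) < card (Rset D T)"
          using merge[OF less.prems(2) rU _ sD tD _ Ust UT[OF True]] UT False fin by blast
        have pend: "\<forall>u\<in>D. \<forall>v\<in>D. \<not> U u v \<longrightarrow> (u,v) \<in> set rest"
          using less.prems(6) UT Ust Cons p by fastforce
        have "c + 2 * card (Rset D Tf) \<le> c1 + 2 * card (Rset D U)"
          using less.hyps[of rest U E' c1] Cons r rU setr dr sr pend unfolding U_def by simp
        then show ?thesis using m c1 by linarith
      next
        case nts: False
        have "(t,s) \<in> set ps" using less.prems(6) sD tD nts by blast
        moreover have "s \<noteq> t" using False less.prems(2) sD unfolding rt_def by blast
        ultimately have tsr: "(t,s) \<in> set rest" using Cons p by auto
        then obtain x rest' where rest: "rest = x # rest'" by (cases rest) auto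
        have "x = (t,s)"
          using adj[OF sym, where s=s and t=t and x=x and rest=rest'] less.prems(4,5) Cons p rest tsr by simp
        then have rest2: "rest = (t,s) # rest'" using rest by simp
        have dr': "distinct rest'" and sr': "sorted_wrt (ec_le \<delta> N) rest'"
          and setr': "set rest' \<subseteq> D \<times> D" using dr sr setr rest2 by auto
        have r2: "ngdf_run N H M ((t,s)#rest') (U, E', c1) (Tf,Ef,c)" using r rest2 U_def by simp
        note st2 = step[OF r2]
        show ?thesis
        proof (cases "U t s")
          case True
          then have r3: "ngdf_run N H M rest' (U,E',c1) (Tf,Ef,c)" using st2 by blast
          have m: "card (Rset D U) < card (Rset D T)"
            using merge[OF less.prems(2) rU _ sD tD _ Ust True] UT False fin by blast
          have pend: "\<forall>u\<in>D. \<forall>v\<in>D. \<not> U u v \<longrightarrow> (u,v) \<in> set rest'"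
            using less.prems(6) UT Ust True Cons p rest2 by fastforce
          have "c + 2 * card (Rset D Tf) \<le> c1 + 2 * card (Rset D U)"
            using less.hyps[of rest' U E' c1] Cons rest2 r3 rU setr' dr' sr' pend by simp
          then show ?thesis using m c1 by linarith
        next
          case nU: False
          then obtain E'' c2 where c2: "c2 \<le> Suc c1"
            and r3: "ngdf_run N H M rest' (T_update U t s, E'', c2) (Tf,Ef,c)" using st2 by blast
          define W where "W = T_update U t s"
          have rW: "rt D W" unfolding W_def using upd_rt rU sD tD by blast
          have WU: "\<And>i j. U i j \<Longrightarrow> W i j" unfolding W_def by (rule upd_ge)
          have Wts: "W t s" unfolding W_def by (rule upd_st)
          have m: "card (Rset D W) < card (Rset D T)"
            using merge[OF less.prems(2) rW _ sD tD _ WU[OF Ust] Wts] UT WU False fin by blast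
          have pend: "\<forall>u\<in>D. \<forall>v\<in>D. \<not> W u v \<longrightarrow> (u,v) \<in> set rest'"
            using less.prems(6) UT WU Ust Wts Cons p rest2 by fastforce
          have "c + 2 * card (Rset D Tf) \<le> c2 + 2 * card (Rset D W)"
            using less.hyps[of rest' W E'' c2] Cons rest2 r3 rW setr' dr' sr' pend unfolding W_def by simp
          then show ?thesis using m c1 c2 by linarith
        qed
      qed
    qed
  qed
qed

lemma gpath_join:
  assumes g1: "gpath A p1" and g2: "gpath A p2" and lh: "last p1 = hd p2"
  shows "gpath A (p1 @ tl p2)"
  unfolding gpath_def
proof (intro conjI allI impI)
  have ne1: "p1 \<noteq> []" and ne2: "p2 \<noteq> []" using g1 g2 unfolding gpath_def by auto
  show "p1 @ tl p2 \<noteq> []" using ne1 by simp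
  fix k assume k: "Suc k < length (p1 @ tl p2)"
  have e1: "\<And>k. Suc k < length p1 \<Longrightarrow> (p1 ! k, p1 ! Suc k) \<in> A" using g1 unfolding gpath_def by blast
  have e2: "\<And>k. Suc k < length p2 \<Longrightarrow> (p2 ! k, p2 ! Suc k) \<in> A" using g2 unfolding gpath_def by blast
  consider "Suc k < length p1" | "Suc k = length p1" | "length p1 \<le> k" by linarith
  then show "((p1 @ tl p2) ! k, (p1 @ tl p2) ! Suc k) \<in> A"
  proof cases
    case 1
    then show ?thesis using e1[OF 1] by (simp add: nth_append)
  next
    case 2
    have a: "(p1 @ tl p2) ! k = p2 ! 0"
    proof -
      have "k = length p1 - 1" using 2 by simp
      then show ?thesis using 2 lh ne1 ne2 by (simp add: nth_append last_conv_nth hd_conv_nth)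
    qed
    have b: "(p1 @ tl p2) ! Suc k = p2 ! 1"
      using 2 ne2 by (cases p2) (auto simp: nth_append)
    have "1 < length p2" using k 2 by simp
    then show ?thesis using e2[of 0] a b by simp
  next
    case 3
    define m where "m = k - length p1"
    have a: "(p1 @ tl p2) ! k = p2 ! Suc m"
      using 3 ne2 unfolding m_def by (cases p2) (auto simp: nth_append)
    have b: "(p1 @ tl p2) ! Suc k = p2 ! Suc (Suc m)"
      using 3 ne2 unfolding m_def by (cases p2) (auto simp: nth_append Suc_diff_le)
    have "Suc (Suc m) < length p2" using k 3 unfolding m_def by simp
    then show ?thesis using e2[of "Suc m"] a b by simp
  qed
qed

lemma INF_enat_ex:
  fixes f :: "'a \<Rightarrow> enat"
  assumes "(INF p\<in>S. f p) \<le> enat K"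
  shows "\<exists>p\<in>S. f p \<le> enat K"
proof -
  have "enat (Suc K) > enat K" by simp
  then obtain p where p: "p \<in> S" "f p < enat (Suc K)" using assms unfolding INF_le_iff by blast
  then have "f p \<le> enat K" by (cases "f p") auto
  then show ?thesis using p by blast
qed

lemma EH_trans:
  assumes "EH F E EEX u v \<le> enat K" "EH F E EEX v w \<le> enat K"
  shows "EH F E EEX u w \<le> enat K"
proof -
  let ?A = "all_edges E EEX"
  obtain p1 where p1: "gpath ?A p1" "hd p1 = u" "last p1 = v" "enat (Max (F ` set p1)) \<le> enat K"
    using INF_enat_ex[OF assms(1)[unfolded EH_def]] by blast
  obtain p2 where p2: "gpath ?A p2" "hd p2 = v" "last p2 = w" "enat (Max (F ` set p2)) \<le> enat K"
    using INF_enat_ex[OF assms(2)[unfolded EH_def]] by blast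
  have ne1: "p1 \<noteq> []" and ne2: "p2 \<noteq> []" using p1 p2 unfolding gpath_def by auto
  define p where "p = p1 @ tl p2"
  have g: "gpath ?A p" unfolding p_def using gpath_join[OF p1(1) p2(1)] p1(3) p2(2) by simp
  have h: "hd p = u" unfolding p_def using ne1 p1 by simp
  have l: "last p = w"
  proof (cases "tl p2 = []")
    case True
    then have "p2 = [hd p2]" using ne2 by (cases p2) auto
    then have "w = v" using p2 by (metis last_ConsL)
    then show ?thesis unfolding p_def using True p1 by simp
  next
    case False
    then show ?thesis unfolding p_def using p2 ne2 by (simp add: last_tl)
  qed
  have b1: "\<forall>x\<in>set p1. F x \<le> K" using p1(4) ne1 by (simp add: Max_le_iff)
  have b2: "\<forall>x\<in>set p2. F x \<le> K" using p2(4) ne2 by (simp add: Max_le_iff)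
  have "set p \<subseteq> set p1 \<union> set p2" unfolding p_def by (auto dest: list.set_sel(2)[rotated] simp: ne2)
  then have "Max (F ` set p) \<le> K" using b1 b2 ne1 unfolding p_def by (auto simp: Max_le_iff)
  then have "enat (Max (F ` set p)) \<le> enat K" by simp
  moreover have "EH F E EEX u w \<le> enat (Max (F ` set p))"
    unfolding EH_def by (rule INF_lower) (use g h l in blast)
  ultimately show ?thesis by (rule order_trans[rotated])
qed

lemma EH_refl:
  assumes "bij_betw N {1..card X} X" "1 \<le> i" "i \<le> card X"
  shows "EH (rank N X) E EEX (N i) (N i) \<le> enat i"
proof -
  have r: "rank N X (N i) = i" unfolding rank_def
    using the_inv_into_f_f[OF bij_betw_imp_inj_on[OF assms(1)]] assms(2,3) by simp
  have "gpath (all_edges E EEX) [N i]" unfolding gpath_def by simp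
  then have "EH (rank N X) E EEX (N i) (N i) \<le> enat (Max (rank N X ` set [N i]))"
    unfolding EH_def by (intro INF_lower) simp
  then show ?thesis using r by simp
qed

theorem theorem5p4:
  fixes X :: "('d::finite) point set" and q :: "'d point"
    and \<delta> :: "'d point \<Rightarrow> 'd point \<Rightarrow> real"
    and N :: "nat \<Rightarrow> 'd point"
    and E :: "('d point \<times> 'd point) set" and EEX :: "('d point \<times> 'd point \<times> enat) set"
    and Nq Kh M :: nat
    and ec :: "(nat \<times> nat) list"
    and T' :: "nat \<Rightarrow> nat \<Rightarrow> bool" and EEX' :: "('d point \<times> 'd point \<times> enat) set" and c :: nat
  assumes "finite X"
    and "\<And>x y. \<delta> x y = \<delta> y x"
    and "nn_enum \<delta> X q N"
    and "E \<subseteq> X \<times> X" and "\<forall>(u, v, h) \<in> EEX. u \<in> X \<and> v \<in> X" and "finite EEX"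
    and "1 \<le> Nq" and "Nq \<le> card X" and "Nq \<le> Kh"
    and "distinct ec"
    and "set ec = {(i, j). 1 \<le> i \<and> i \<le> Nq \<and> 1 \<le> j \<and> j \<le> Nq \<and>
                   \<not> EH (rank N X) E EEX (N i) (N j) \<le> enat Kh}"
    and "sorted_wrt (ec_le \<delta> N) ec"
    and "ngdf_run N (\<lambda>i j. EH (rank N X) E EEX (N i) (N j)) M ec
           (\<lambda>i j. EH (rank N X) E EEX (N i) (N j) \<le> enat Kh, EEX, 0) (T', EEX', c)"
  shows "c \<le> 2 * (Nq - 1)"
proof -
  define D where "D = {1..Nq}"
  define T0 where "T0 = (\<lambda>i j. EH (rank N X) E EEX (N i) (N j) \<le> enat Kh)"
  have sym: "\<forall>x y. \<delta> x y = \<delta> y x" using assms(2) by blast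
  have fin: "finite D" unfolding D_def by simp
  have bij: "bij_betw N {1..card X} X" using assms(3) unfolding nn_enum_def by blast
  have rt0: "rt D T0" unfolding rt_def
  proof (intro conjI ballI impI)
    fix i assume "i \<in> D"
    then have "1 \<le> i" "i \<le> card X" "i \<le> Kh" using assms(8,9) unfolding D_def by auto
    then show "T0 i i" unfolding T0_def using EH_refl[OF bij, of i E EEX]
      by (meson enat_ord_simps(1) order_trans)
  next
    fix i j k assume "T0 i j" "T0 j k"
    then show "T0 i k" unfolding T0_def by (rule EH_trans)
  qed
  have sub: "set ec \<subseteq> D \<times> D" using assms(11) unfolding D_def by auto
  have pend: "\<forall>u\<in>D. \<forall>v\<in>D. \<not> T0 u v \<longrightarrow> (u,v) \<in> set ec"
    using assms(11) unfolding D_def T0_def by auto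
  have run: "ngdf_run N (\<lambda>i j. EH (rank N X) E EEX (N i) (N j)) M ec (T0, EEX, 0) (T', EEX', c)"
    using assms(13) unfolding T0_def .
  have main': "c + 2 * card (Rset D T') \<le> 0 + 2 * card (Rset D T0)"
    using main[OF sym fin run rt0 sub assms(10) assms(12) pend] .
  have "card (Rset D T0) \<le> card D" using fin by (intro card_mono) (auto simp: Rset_def)
  then have u: "card (Rset D T0) \<le> Nq" unfolding D_def by simp
  have "1 \<in> Rset D T'" using assms(7) unfolding Rset_def D_def by auto
  moreover have "finite (Rset D T')" using fin unfolding Rset_def by simp
  ultimately have "card (Rset D T') \<ge> 1"
    by (metis One_nat_def Suc_leI card_gt_0_iff empty_iff)
  then show ?thesis using main' u by linarith
qed

end
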